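(* Let $T$ be a triangulation of an unpunctured bordered surface $(S,M)$, $Q=Q_{\overline T}$ and $F_1,\dots,F_n$ the associated exchange polynomials. If $F_i=F_j$ for some $i\neq j$, then $Q$ contains neither a subquiver $\tilde k\leftarrow i\rightarrow k$ nor a double arrow $i\xrightarrow{2}k$, for any vertex $k$ of $Q$.
   Context: $(S,M)$: compact surface (possibly non-orientable) with nonempty boundary, marked points $M\subset\partial S$ meeting every boundary component, no punctures, not a monogon/digon/triangle (boundary segments may or may not receive variables; if not, their quiver vertices are deleted). Quasi-arcs: arcs (up to isotopy) not bounding a Möbius strip with one marked point, and one-sided simple closed curves; compatible = disjoint, or the unique arc and one-sided curve in a Möbius strip with one marked point. Triangulation: maximal compatible set without one-sided curves. Double cover and quiver: replace each cross-cap by a cylinder to get $\tilde S$, glue two copies along new cylinder boundaries by the antipodal map (two oppositely oriented copies if $S$ orientable); $T$ lifts to $\overline T$ with lifts $i,\tilde i$ ($\tilde{\tilde i}=i$). $Q_{\overline T}$: vertices arcs (and boundary segments with variables) of $\overline T$; arrow $i\to j$ for each triangle where $j$ follows $i$ in the orientation; 2-cycles cancelled; $b_{ij}$ = (arrows $i\to j$) $-$ (arrows $j\to i$). $F_j=\prod_{b_{ij}+b_{\tilde ij}>0}x_i^{b_{ij}+b_{\tilde ij}}+\prod_{b_{ij}+b_{\tilde ij}<0}x_i^{-(b_{ij}+b_{\tilde ij})}$ over twin-pair representatives $i$. *)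

theory Defs
  imports Main
begin

text \<open>
S is obtained by gluing a finite set Tri of triangles along their sides.
Each triangle t has sides 0,1,2 (indices mod 3); with the reference orientation of t,
side i runs from corner i to corner i+1 (mod 3).
  ed t i : the edge of T (arc or boundary segment) occupying side i of t;
  fl t i : a flag recording the gluing: in the lifted triangle (t,eps) of the
           orientation double cover, side i carries the lift (ed t i, eps ~= fl t i).
Two sides carrying the same arc are glued; the gluing is orientation preserving
(w.r.t. the reference orientations) iff their flags agree.
Frozen: the boundary segments that receive variables.
\<close>

definition sides :: "'t set \<Rightarrow> ('t \<times> nat) set" where
  "sides Tri = Tri \<times> {0,1,2}"

definition occ :: "'t set \<Rightarrow> ('t \<Rightarrow> nat \<Rightarrow> 'e) \<Rightarrow> 'e \<Rightarrow> nat" where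
  "occ Tri ed e = card {s \<in> sides Tri. ed (fst s) (snd s) = e}"

definition arcs :: "'t set \<Rightarrow> ('t \<Rightarrow> nat \<Rightarrow> 'e) \<Rightarrow> 'e set" where
  "arcs Tri ed = {e. occ Tri ed e = 2}"

definition bsegs :: "'t set \<Rightarrow> ('t \<Rightarrow> nat \<Rightarrow> 'e) \<Rightarrow> 'e set" where
  "bsegs Tri ed = {e. occ Tri ed e = 1}"

definition tri_adj :: "'t set \<Rightarrow> ('t \<Rightarrow> nat \<Rightarrow> 'e) \<Rightarrow> ('t \<times> 't) set" where
  "tri_adj Tri ed = {(t1,t2). t1 \<in> Tri \<and> t2 \<in> Tri \<and> (\<exists>i<3. \<exists>j<3. ed t1 i = ed t2 j)}"

text \<open>Identification of corners induced by the gluing of sides; the marked points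
are the classes of corners.\<close>
definition corner_glue :: "'t set \<Rightarrow> ('t \<Rightarrow> nat \<Rightarrow> 'e) \<Rightarrow> ('t \<Rightarrow> nat \<Rightarrow> bool)
    \<Rightarrow> (('t \<times> nat) \<times> ('t \<times> nat)) set" where
  "corner_glue Tri ed fl =
     {((t1,c1),(t2,c2)). \<exists>i1 i2. (t1,i1) \<in> sides Tri \<and> (t2,i2) \<in> sides Tri \<and>
        (t1,i1) \<noteq> (t2,i2) \<and> ed t1 i1 = ed t2 i2 \<and>
        (if fl t1 i1 = fl t2 i2
         then (c1 = i1 \<and> c2 = (i2+1) mod 3) \<or> (c1 = (i1+1) mod 3 \<and> c2 = i2)
         else (c1 = i1 \<and> c2 = i2) \<or> (c1 = (i1+1) mod 3 \<and> c2 = (i2+1) mod 3))}"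

definition same_vertex :: "'t set \<Rightarrow> ('t \<Rightarrow> nat \<Rightarrow> 'e) \<Rightarrow> ('t \<Rightarrow> nat \<Rightarrow> bool)
    \<Rightarrow> (('t \<times> nat) \<times> ('t \<times> nat)) set" where
  "same_vertex Tri ed fl = (corner_glue Tri ed fl \<union> (corner_glue Tri ed fl)\<inverse>)\<^sup>*"

definition bdry_corner :: "'t set \<Rightarrow> ('t \<Rightarrow> nat \<Rightarrow> 'e) \<Rightarrow> 't \<times> nat \<Rightarrow> bool" where
  "bdry_corner Tri ed x = (ed (fst x) (snd x) \<in> bsegs Tri ed \<or>
                           ed (fst x) ((snd x + 2) mod 3) \<in> bsegs Tri ed)"

definition is_unpunctured_triangulation ::
  "'t set \<Rightarrow> ('t \<Rightarrow> nat \<Rightarrow> 'e) \<Rightarrow> ('t \<Rightarrow> nat \<Rightarrow> bool) \<Rightarrow> 'e set \<Rightarrow> bool" where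
  "is_unpunctured_triangulation Tri ed fl Frozen \<longleftrightarrow>
     finite Tri \<and> Tri \<noteq> {} \<and>
     \<comment> \<open>every edge occupies one (boundary segment) or two (arc) sides\<close>
     (\<forall>t\<in>Tri. \<forall>i<3. ed t i \<in> arcs Tri ed \<union> bsegs Tri ed) \<and>
     \<comment> \<open>S connected\<close>
     (\<forall>t1\<in>Tri. \<forall>t2\<in>Tri. (t1,t2) \<in> (tri_adj Tri ed)\<^sup>*) \<and>
     \<comment> \<open>no punctures: every marked point lies on the boundary\<close>
     (\<forall>x\<in>sides Tri. \<exists>y\<in>sides Tri. (x,y) \<in> same_vertex Tri ed fl \<and> bdry_corner Tri ed y) \<and>
     \<comment> \<open>a triangle with two equal sides is the Moebius strip with one marked point;
         its third side cannot be an arc (arcs do not bound such a strip)\<close>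
     (\<forall>t\<in>Tri. \<forall>i<3. \<forall>j<3. i \<noteq> j \<and> ed t i = ed t j \<longrightarrow>
         ed t (3 - i - j) \<in> bsegs Tri ed) \<and>
     \<comment> \<open>not a triangle (monogons and digons admit no triangulation)\<close>
     arcs Tri ed \<noteq> {} \<and>
     Frozen \<subseteq> bsegs Tri ed"

text \<open>The quiver of the lifted triangulation on the double cover.\<close>
definition qverts :: "'t set \<Rightarrow> ('t \<Rightarrow> nat \<Rightarrow> 'e) \<Rightarrow> 'e set \<Rightarrow> ('e \<times> bool) set" where
  "qverts Tri ed Frozen = (arcs Tri ed \<union> Frozen) \<times> UNIV"

definition twin :: "'e \<times> bool \<Rightarrow> 'e \<times> bool" where
  "twin v = (fst v, \<not> snd v)"

definition lift :: "('t \<Rightarrow> nat \<Rightarrow> 'e) \<Rightarrow> ('t \<Rightarrow> nat \<Rightarrow> bool) \<Rightarrow> 't \<Rightarrow> bool \<Rightarrow> nat \<Rightarrow> 'e \<times> bool" where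
  "lift ed fl t eps i = (ed t i, eps \<noteq> fl t i)"

definition nxt :: "bool \<Rightarrow> nat \<Rightarrow> nat" where
  "nxt eps i = (if eps then (i + 1) mod 3 else (i + 2) mod 3)"

text \<open>Number of arrows u -> v before cancelling 2-cycles: one for each lifted triangle
(t,eps) in which v follows u in the orientation.\<close>
definition narr :: "'t set \<Rightarrow> ('t \<Rightarrow> nat \<Rightarrow> 'e) \<Rightarrow> ('t \<Rightarrow> nat \<Rightarrow> bool)
    \<Rightarrow> 'e \<times> bool \<Rightarrow> 'e \<times> bool \<Rightarrow> nat" where
  "narr Tri ed fl u v = card {(t,eps,i). t \<in> Tri \<and> i < 3 \<and>
       lift ed fl t eps i = u \<and> lift ed fl t eps (nxt eps i) = v}"

definition bq :: "'t set \<Rightarrow> ('t \<Rightarrow> nat \<Rightarrow> 'e) \<Rightarrow> ('t \<Rightarrow> nat \<Rightarrow> bool) \<Rightarrow> 'e set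
    \<Rightarrow> 'e \<times> bool \<Rightarrow> 'e \<times> bool \<Rightarrow> int" where
  "bq Tri ed fl Frozen u v =
     (if u \<in> qverts Tri ed Frozen \<and> v \<in> qverts Tri ed Frozen
      then int (narr Tri ed fl u v) - int (narr Tri ed fl v u) else 0)"

text \<open>Exchange polynomial F_j (j an arc of T), in the variables x_i indexed by the
twin pairs, i.e. by the arcs and frozen boundary segments of T. A polynomial with integer
coefficients is represented by its coefficient function on exponent vectors.\<close>
definition exch_coef :: "'t set \<Rightarrow> ('t \<Rightarrow> nat \<Rightarrow> 'e) \<Rightarrow> ('t \<Rightarrow> nat \<Rightarrow> bool) \<Rightarrow> 'e set
    \<Rightarrow> 'e \<Rightarrow> 'e \<Rightarrow> int" where
  "exch_coef Tri ed fl Frozen j i =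
     bq Tri ed fl Frozen (i, False) (j, False) + bq Tri ed fl Frozen (i, True) (j, False)"

definition exch_poly :: "'t set \<Rightarrow> ('t \<Rightarrow> nat \<Rightarrow> 'e) \<Rightarrow> ('t \<Rightarrow> nat \<Rightarrow> bool) \<Rightarrow> 'e set
    \<Rightarrow> 'e \<Rightarrow> ('e \<Rightarrow> nat) \<Rightarrow> int" where
  "exch_poly Tri ed fl Frozen j =
     (let c = exch_coef Tri ed fl Frozen j;
          V = arcs Tri ed \<union> Frozen;
          mpos = (\<lambda>i. if i \<in> V \<and> c i > 0 then nat (c i) else 0);
          mneg = (\<lambda>i. if i \<in> V \<and> c i < 0 then nat (- c i) else 0)
      in (\<lambda>m. (if m = mpos then 1 else 0) + (if m = mneg then 1 else 0)))"

end

theory Submission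
  imports Defs
begin


definition NS :: "'t set \<Rightarrow> ('t \<Rightarrow> nat \<Rightarrow> 'e) \<Rightarrow> ('t \<Rightarrow> nat \<Rightarrow> bool) \<Rightarrow> 'e\<times>bool \<Rightarrow> 'e\<times>bool \<Rightarrow> ('t\<times>bool\<times>nat) set" where
 "NS Tri ed fl u v = {(t,eps,i). t \<in> Tri \<and> i < 3 \<and> lift ed fl t eps i = u \<and> lift ed fl t eps (nxt eps i) = v}"

lemma narr_NS: "narr Tri ed fl u v = card (NS Tri ed fl u v)" by (simp add: narr_def NS_def)

definition PosS :: "'t set \<Rightarrow> ('t\<times>bool\<times>nat) set" where "PosS Tri = Tri \<times> (UNIV::bool set) \<times> {..<3::nat}"
lemma finite_PosS: "finite Tri \<Longrightarrow> finite (PosS Tri)" by (simp add: PosS_def)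
lemma NS_sub: "NS Tri ed fl u v \<subseteq> PosS Tri" by (auto simp: NS_def PosS_def)
lemma finite_NS: "finite Tri \<Longrightarrow> finite (NS Tri ed fl u v)" by (meson NS_sub finite_PosS finite_subset)

definition DD :: "'t set \<Rightarrow> ('t \<Rightarrow> nat \<Rightarrow> 'e) \<Rightarrow> 'e \<Rightarrow> 'e \<Rightarrow> ('t\<times>bool\<times>nat) set" where
 "DD Tri ed x y = {(t,eps,p). t \<in> Tri \<and> p < 3 \<and> ed t p = x \<and> ed t (nxt eps p) = y}"
lemma DD_sub: "DD Tri ed x y \<subseteq> PosS Tri" by (auto simp: DD_def PosS_def)
lemma finite_DD: "finite Tri \<Longrightarrow> finite (DD Tri ed x y)" by (meson DD_sub finite_PosS finite_subset)

lemma three: "(p::nat) < 3 \<Longrightarrow> p = 0 \<or> p = 1 \<or> p = 2" by auto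

lemma nxt_vals[simp]: "nxt True 0 = 1" "nxt True 1 = 2" "nxt True 2 = 0" "nxt False 0 = 2" "nxt False 1 = 0" "nxt False 2 = 1"
  "nxt True (Suc 0) = 2" "nxt False (Suc 0) = 0" "nxt False 2 = Suc 0"
  by (simp_all add: nxt_def)

lemma nxt_lt: "p<3 \<Longrightarrow> nxt eps p < 3" by (auto simp: nxt_def)
lemma nxt_inv: "p < 3 \<Longrightarrow> nxt (\<not>eps) (nxt eps p) = p"
  using three[of p] by (cases eps) auto
lemma nxt_ne: "p<3 \<Longrightarrow> nxt eps p \<noteq> p"
  using three[of p] by (cases eps) auto
lemma nxt_ne2: "p<3 \<Longrightarrow> nxt True p \<noteq> nxt False p"
  using three[of p] by auto
lemma third1: "p<3 \<Longrightarrow> 3 - p - nxt eps p = nxt (\<not>eps) p"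
  using three[of p] by (cases eps) auto
lemma third2: "p<3 \<Longrightarrow> 3 - nxt True p - nxt False p = p"
  using three[of p] by auto
lemma cover3: "p<3 \<Longrightarrow> q<3 \<Longrightarrow> q = p \<or> q = nxt True p \<or> q = nxt False p"
  using three[of p] three[of q] by auto

lemma twin_twin[simp]: "twin (twin u) = u" by (cases u) (simp add: twin_def)

lemma twin_le: assumes "finite Tri" shows "narr Tri ed fl v u \<le> narr Tri ed fl (twin u) (twin v)"
proof -
  let ?f = "\<lambda>(t,eps,p). (t, \<not>eps, nxt eps p)"
  have inj: "inj_on ?f (NS Tri ed fl v u)"
  proof (rule inj_onI)
    fix x y assume x: "x \<in> NS Tri ed fl v u" and y: "y \<in> NS Tri ed fl v u" and e: "?f x = ?f y"
    obtain t eps p where xx: "x = (t,eps,p)" by (cases x)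
    obtain t' eps' p' where yy: "y = (t',eps',p')" by (cases y)
    from x y have "p < 3" "p' < 3" by (auto simp: NS_def xx yy)
    from e have a: "t = t'" "eps = eps'" "nxt eps p = nxt eps p'" using e xx yy by auto
    have "p = p'" using nxt_inv[of p eps] nxt_inv[of p' eps] a \<open>p<3\<close> \<open>p'<3\<close> by metis
    then show "x = y" using a xx yy by simp
  qed
  have im: "?f ` NS Tri ed fl v u \<subseteq> NS Tri ed fl (twin u) (twin v)"
  proof
    fix z assume "z \<in> ?f ` NS Tri ed fl v u"
    then obtain t eps p where z: "z = (t, \<not>eps, nxt eps p)" and m: "(t,eps,p) \<in> NS Tri ed fl v u" by auto
    from m have "t \<in> Tri" "p < 3" "lift ed fl t eps p = v" "lift ed fl t eps (nxt eps p) = u"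
      by (auto simp: NS_def)
    then show "z \<in> NS Tri ed fl (twin u) (twin v)"
      unfolding z NS_def using nxt_inv[of p eps] nxt_lt[of p eps]
      by (auto simp: lift_def twin_def)
  qed
  show ?thesis unfolding narr_NS
    using card_inj_on_le[OF inj im finite_NS[OF assms]] .
qed

lemma twin_eq: "finite Tri \<Longrightarrow> narr Tri ed fl v u = narr Tri ed fl (twin u) (twin v)"
  using twin_le[of Tri ed fl v u] twin_le[of Tri ed fl "twin u" "twin v"] by simp

lemma qverts_twin[simp]: "twin u \<in> qverts Tri ed Frozen \<longleftrightarrow> u \<in> qverts Tri ed Frozen"
  by (cases u) (auto simp: qverts_def twin_def)

lemma bq_anti: "bq Tri ed fl Frozen u v = - bq Tri ed fl Frozen v u"
  by (auto simp: bq_def)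

lemma bq_twin: "finite Tri \<Longrightarrow> bq Tri ed fl Frozen (twin u) (twin v) = - bq Tri ed fl Frozen u v"
  using twin_eq[of Tri ed fl v u] twin_eq[of Tri ed fl u v] by (auto simp: bq_def)

lemma Lsum: assumes "finite Tri" "fst u1 = x" "fst u2 = x" "u1 \<noteq> u2" "fst v = y"
  shows "narr Tri ed fl u1 v + narr Tri ed fl u2 v \<le> card (DD Tri ed x y)"
proof -
  have d: "NS Tri ed fl u1 v \<inter> NS Tri ed fl u2 v = {}" using assms(4) by (auto simp: NS_def)
  have s: "NS Tri ed fl u1 v \<union> NS Tri ed fl u2 v \<subseteq> DD Tri ed x y"
    using assms(2,3,5) by (auto simp: NS_def DD_def lift_def)
  show ?thesis unfolding narr_NS
    using card_Un_disjoint[OF finite_NS[OF assms(1)] finite_NS[OF assms(1)] d, symmetric]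
      card_mono[OF finite_DD[OF assms(1)] s] by simp
qed

lemma ab_disj: "e \<in> arcs Tri ed \<Longrightarrow> e \<notin> bsegs Tri ed" by (simp add: arcs_def bsegs_def)

lemma finite_sides: "finite Tri \<Longrightarrow> finite (sides Tri)" by (simp add: sides_def)



lemma c1: assumes "is_unpunctured_triangulation Tri ed fl Frozen" "t \<in> Tri" "p<3" "ed t p = ed t (nxt eps p)"
  shows "ed t (nxt (\<not>eps) p) \<in> bsegs Tri ed"
proof -
  have "\<forall>t\<in>Tri. \<forall>i<3. \<forall>j<3. i \<noteq> j \<and> ed t i = ed t j \<longrightarrow> ed t (3 - i - j) \<in> bsegs Tri ed"
    using assms(1) unfolding is_unpunctured_triangulation_def by blast
  then have "ed t (3 - p - nxt eps p) \<in> bsegs Tri ed"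
    using assms(2-4) nxt_ne[of p eps] nxt_lt[of p eps] by metis
  then show ?thesis using third1[OF assms(3)] by simp
qed

lemma c2: assumes "is_unpunctured_triangulation Tri ed fl Frozen" "t \<in> Tri" "p<3" "ed t (nxt True p) = ed t (nxt False p)"
  shows "ed t p \<in> bsegs Tri ed"
proof -
  have "\<forall>t\<in>Tri. \<forall>i<3. \<forall>j<3. i \<noteq> j \<and> ed t i = ed t j \<longrightarrow> ed t (3 - i - j) \<in> bsegs Tri ed"
    using assms(1) unfolding is_unpunctured_triangulation_def by blast
  then have "ed t (3 - nxt True p - nxt False p) \<in> bsegs Tri ed"
    using assms(2-4) nxt_ne2[of p] nxt_lt[of p True] nxt_lt[of p False] by metis
  then show ?thesis using third2[OF assms(3)] by simp
qed

lemma fin_tri: "is_unpunctured_triangulation Tri ed fl Frozen \<Longrightarrow> finite Tri"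
  by (simp add: is_unpunctured_triangulation_def)

definition SS :: "'t set \<Rightarrow> ('t \<Rightarrow> nat \<Rightarrow> 'e) \<Rightarrow> 'e \<Rightarrow> ('t \<times> nat) set" where
  "SS Tri ed x = {s \<in> sides Tri. ed (fst s) (snd s) = x}"

lemma SS_card: "card (SS Tri ed x) = occ Tri ed x" by (simp add: SS_def occ_def)
lemma SS_fin: "finite Tri \<Longrightarrow> finite (SS Tri ed x)"
  unfolding SS_def by (rule finite_subset[OF _ finite_sides]) auto
lemma sides_mem: "(t,p) \<in> sides Tri \<longleftrightarrow> t \<in> Tri \<and> p < 3"
proof
  assume "(t,p) \<in> sides Tri" then show "t \<in> Tri \<and> p < 3" by (auto simp: sides_def)
next
  assume a: "t \<in> Tri \<and> p < 3" then have "p = 0 \<or> p = 1 \<or> p = 2" using three by blast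
  with a show "(t,p) \<in> sides Tri" by (auto simp: sides_def)
qed
lemma SS_mem: "(t,p) \<in> SS Tri ed x \<longleftrightarrow> t \<in> Tri \<and> p < 3 \<and> ed t p = x"
  by (simp add: SS_def sides_mem)

lemma pigeon: assumes H: "is_unpunctured_triangulation Tri ed fl Frozen" and x: "x \<in> arcs Tri ed"
  shows "card (DD Tri ed x y) \<le> 2"
proof -
  have fin: "finite Tri" using fin_tri[OF H] .
  let ?g = "\<lambda>(t,eps,p::nat). (t,p)"
  have inj: "inj_on ?g (DD Tri ed x y)"
  proof (rule inj_onI)
    fix a b assume a: "a \<in> DD Tri ed x y" and b: "b \<in> DD Tri ed x y" and e: "?g a = ?g b"
    obtain t eps p where aa: "a = (t,eps,p)" by (cases a)
    obtain t' eps' p' where bb: "b = (t',eps',p')" by (cases b)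
    have tt0: "(t,p) = (t',p')" using e by (simp add: aa bb)
    have tt: "t' = t" "p' = p" using tt0 by simp_all
    have ma: "t \<in> Tri \<and> p < 3 \<and> ed t p = x \<and> ed t (nxt eps p) = y"
      using a by (simp add: aa DD_def)
    have mb: "ed t' (nxt eps' p') = y"
      using b by (simp add: bb DD_def)
    have m: "t \<in> Tri" "p < 3" "ed t p = x" "ed t (nxt eps p) = y" "ed t (nxt eps' p) = y"
      using ma mb tt by simp_all
    have "eps = eps'"
    proof (rule ccontr)
      assume "eps \<noteq> eps'"
      then have "ed t (nxt True p) = ed t (nxt False p)" using m(4,5) by (cases eps; cases eps'; simp)
      then have "ed t p \<in> bsegs Tri ed" using c2[OF H m(1,2)] by blast
      then show False using m(3) x ab_disj by metis
    qed
    then show "a = b" using aa bb tt by simp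
  qed
  have im: "?g ` DD Tri ed x y \<subseteq> SS Tri ed x" by (auto simp: DD_def SS_mem)
  have "card (DD Tri ed x y) \<le> card (SS Tri ed x)"
    using card_inj_on_le[OF inj im SS_fin[OF fin]] .
  also have "\<dots> = 2" using x by (simp add: SS_card arcs_def)
  finally show ?thesis .
qed

definition PP :: "'t set \<Rightarrow> ('t \<Rightarrow> nat \<Rightarrow> 'e) \<Rightarrow> 'e \<Rightarrow> ('t\<times>bool\<times>nat) set" where
  "PP Tri ed x = {(t,eps,p). t\<in>Tri \<and> p<3 \<and> ed t p = x}"

lemma Pos_card: assumes "finite Tri"
  shows "card (PP Tri ed x) \<le> 2 * occ Tri ed x"
proof -
  have "PP Tri ed x = (\<lambda>(eps,s). (fst s, eps, snd s)) ` ((UNIV::bool set) \<times> SS Tri ed x)"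
  proof (intro set_eqI iffI)
    fix z assume "z \<in> PP Tri ed x"
    then obtain t eps p where z: "z = (t,eps,p)" "t\<in>Tri" "p<3" "ed t p = x" by (auto simp: PP_def)
    then have "(eps,(t,p)) \<in> UNIV \<times> SS Tri ed x" by (simp add: SS_mem)
    then show "z \<in> (\<lambda>(eps,s). (fst s, eps, snd s)) ` ((UNIV::bool set) \<times> SS Tri ed x)"
      unfolding z(1) by (rule rev_image_eqI) simp
  next
    fix z assume "z \<in> (\<lambda>(eps,s). (fst s, eps, snd s)) ` ((UNIV::bool set) \<times> SS Tri ed x)"
    then obtain eps t p where "z = (t,eps,p)" "(t,p) \<in> SS Tri ed x" by force
    then show "z \<in> PP Tri ed x" by (simp add: SS_mem PP_def)
  qed
  moreover have "finite ((UNIV::bool set) \<times> SS Tri ed x)" by (intro finite_cartesian_product) (simp_all add: SS_fin assms)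
  ultimately have "card (PP Tri ed x) \<le> card ((UNIV::bool set) \<times> SS Tri ed x)"
    using card_image_le by (simp only:)
  also have "\<dots> = 2 * occ Tri ed x" by (simp add: card_cartesian_product SS_card)
  finally show ?thesis .
qed



lemma coef_DD:
  assumes H: "is_unpunctured_triangulation Tri ed fl Frozen" and x: "x \<in> arcs Tri ed"
    and k: "\<kappa> \<in> arcs Tri ed \<union> Frozen"
    and c: "exch_coef Tri ed fl Frozen x \<kappa> \<ge> 2 \<or> exch_coef Tri ed fl Frozen x \<kappa> \<le> -2"
  shows "card (DD Tri ed \<kappa> x) \<ge> 2"
proof -
  have fin: "finite Tri" using fin_tri[OF H] .
  have q: "(\<kappa>,b) \<in> qverts Tri ed Frozen" "(x,b) \<in> qverts Tri ed Frozen" for b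
    using k x by (auto simp: qverts_def)
  let ?N = "narr Tri ed fl"
  have ce: "exch_coef Tri ed fl Frozen x \<kappa> =
     (int (?N (\<kappa>,False) (x,False)) - int (?N (x,False) (\<kappa>,False))) +
     (int (?N (\<kappa>,True) (x,False)) - int (?N (x,False) (\<kappa>,True)))"
    by (simp add: exch_coef_def bq_def q)
  have L1: "?N (\<kappa>,False) (x,False) + ?N (\<kappa>,True) (x,False) \<le> card (DD Tri ed \<kappa> x)"
    by (rule Lsum[OF fin]) simp_all
  have L2: "?N (\<kappa>,True) (x,True) + ?N (\<kappa>,False) (x,True) \<le> card (DD Tri ed \<kappa> x)"
    by (rule Lsum[OF fin]) simp_all
  have t1: "?N (x,False) (\<kappa>,False) = ?N (\<kappa>,True) (x,True)"
    using twin_eq[OF fin, of ed fl "(x,False)" "(\<kappa>,False)"] by (simp add: twin_def)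
  have t2: "?N (x,False) (\<kappa>,True) = ?N (\<kappa>,False) (x,True)"
    using twin_eq[OF fin, of ed fl "(x,False)" "(\<kappa>,True)"] by (simp add: twin_def)
  show ?thesis using c ce L1 L2 t1 t2 by linarith
qed

lemma poly_step:
  fixes ed :: "'t \<Rightarrow> nat \<Rightarrow> 'e"
  assumes k: "\<kappa> \<in> arcs Tri ed \<union> Frozen"
    and F: "exch_poly Tri ed fl Frozen i = exch_poly Tri ed fl Frozen j"
    and c: "exch_coef Tri ed fl Frozen i \<kappa> \<ge> 2 \<or> exch_coef Tri ed fl Frozen i \<kappa> \<le> -2"
  shows "exch_coef Tri ed fl Frozen j \<kappa> \<ge> 2 \<or> exch_coef Tri ed fl Frozen j \<kappa> \<le> -2"
proof -
  define V where "V = arcs Tri ed \<union> Frozen"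
  define ci where "ci = exch_coef Tri ed fl Frozen i"
  define cj where "cj = exch_coef Tri ed fl Frozen j"
  define mp where "mp = (\<lambda>c::'e\<Rightarrow>int. \<lambda>i. if i \<in> V \<and> c i > 0 then nat (c i) else 0)"
  define mn where "mn = (\<lambda>c::'e\<Rightarrow>int. \<lambda>i. if i \<in> V \<and> c i < 0 then nat (- c i) else 0)"
  have P: "exch_poly Tri ed fl Frozen y = (\<lambda>m. (if m = mp (exch_coef Tri ed fl Frozen y) then 1 else 0)
      + (if m = mn (exch_coef Tri ed fl Frozen y) then 1 else 0))" for y
    by (simp add: exch_poly_def Let_def mp_def mn_def V_def)
  define m where "m = (if ci \<kappa> \<ge> 2 then mp ci else mn ci)"
  have "exch_poly Tri ed fl Frozen i m \<ge> 1" unfolding P ci_def[symmetric] m_def by simp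
  then have "exch_poly Tri ed fl Frozen j m \<ge> 1" using F by simp
  then have mm: "m = mp cj \<or> m = mn cj" unfolding P cj_def[symmetric] by (simp split: if_splits)
  have kV: "\<kappa> \<in> V" using k V_def by simp
  have m2: "m \<kappa> \<ge> 2" using c kV unfolding m_def mp_def mn_def ci_def[symmetric] by auto
  show ?thesis
  proof (cases "m = mp cj")
    case True
    then have "mp cj \<kappa> \<ge> 2" using m2 by simp
    then show ?thesis unfolding mp_def cj_def by (simp split: if_splits)
  next
    case False
    then have "mn cj \<kappa> \<ge> 2" using m2 mm by simp
    then show ?thesis unfolding mn_def cj_def by (simp split: if_splits)
  qed
qed



lemma final:
  assumes H: "is_unpunctured_triangulation Tri ed fl Frozen"
    and ia: "i \<in> arcs Tri ed" and ja: "j \<in> arcs Tri ed" and ij: "i \<noteq> j"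
    and k: "\<kappa> \<in> arcs Tri ed \<union> bsegs Tri ed"
    and di: "card (DD Tri ed \<kappa> i) \<ge> 2" and dj: "card (DD Tri ed \<kappa> j) \<ge> 2"
  shows False
proof -
  have fin: "finite Tri" using fin_tri[OF H] .
  have occ2: "occ Tri ed \<kappa> \<le> 2" using k by (auto simp: arcs_def bsegs_def)
  have sub: "DD Tri ed \<kappa> i \<union> DD Tri ed \<kappa> j \<subseteq> PP Tri ed \<kappa>"
    by (auto simp: DD_def PP_def)
  have disj: "DD Tri ed \<kappa> i \<inter> DD Tri ed \<kappa> j = {}" using ij by (auto simp: DD_def)
  have finPP: "finite (PP Tri ed \<kappa>)"
    by (rule finite_subset[OF _ finite_PosS[OF fin]]) (auto simp: PP_def PosS_def)
  have cU: "card (DD Tri ed \<kappa> i \<union> DD Tri ed \<kappa> j) \<ge> 4"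
    using card_Un_disjoint[OF finite_DD[OF fin] finite_DD[OF fin] disj] di dj by simp
  have cPP: "card (PP Tri ed \<kappa>) \<le> 2 * occ Tri ed \<kappa>" using Pos_card[OF fin] .
  have cP4: "card (PP Tri ed \<kappa>) \<ge> 4" using card_mono[OF finPP sub] cU by simp
  have occ: "occ Tri ed \<kappa> = 2" using cPP cP4 occ2 by simp
  then have karc: "\<kappa> \<in> arcs Tri ed" by (simp add: arcs_def)
  have eqP: "DD Tri ed \<kappa> i \<union> DD Tri ed \<kappa> j = PP Tri ed \<kappa>"
    using card_subset_eq[OF finPP sub] cU cPP occ card_mono[OF finPP sub] by simp
  have nx: "ed t (nxt eps p) = i \<or> ed t (nxt eps p) = j" if "t\<in>Tri" "p<3" "ed t p = \<kappa>" for t p eps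
  proof -
    have "(t,eps,p) \<in> PP Tri ed \<kappa>" using that by (simp add: PP_def)
    then have "(t,eps,p) \<in> DD Tri ed \<kappa> i \<union> DD Tri ed \<kappa> j" using eqP by simp
    then have "(t \<in> Tri \<and> p < 3 \<and> ed t p = \<kappa> \<and> ed t (nxt eps p) = i) \<or>
      (t \<in> Tri \<and> p < 3 \<and> ed t p = \<kappa> \<and> ed t (nxt eps p) = j)" by (simp add: DD_def)
    then show ?thesis by blast
  qed
  have inb: "\<not> ed t q \<in> bsegs Tri ed" if "ed t q = i \<or> ed t q = j" for t q
    using that ia ja ab_disj by metis
  have dist: "ed t (nxt True p) \<noteq> ed t (nxt False p)" if "t\<in>Tri" "p<3" "ed t p = \<kappa>" for t p
  proof
    assume "ed t (nxt True p) = ed t (nxt False p)"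
    then have "ed t p \<in> bsegs Tri ed" using c2[OF H that(1,2)] by blast
    then show False using that(3) karc ab_disj by metis
  qed
  have kn: "\<kappa> \<noteq> x" if x: "x = i \<or> x = j" and dx: "card (DD Tri ed \<kappa> x) \<ge> 2" for x
  proof
    assume kx: "\<kappa> = x"
    have "DD Tri ed \<kappa> x \<noteq> {}" using dx by (metis card.empty not_numeral_le_zero)
    then obtain t eps p where m: "(t,eps,p) \<in> DD Tri ed \<kappa> x" by auto
    then have m': "t \<in> Tri" "p < 3" "ed t p = \<kappa>" "ed t (nxt eps p) = x" by (simp_all add: DD_def)
    then have "ed t p = ed t (nxt eps p)" using kx by simp
    then have "ed t (nxt (\<not>eps) p) \<in> bsegs Tri ed" using c1[OF H m'(1,2)] by blast
    moreover have "ed t (nxt (\<not>eps) p) = i \<or> ed t (nxt (\<not>eps) p) = j" using nx[OF m'(1-3)] .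
    ultimately show False using inb by blast
  qed
  have kni: "\<kappa> \<noteq> i" using kn[of i] di by simp
  have knj: "\<kappa> \<noteq> j" using kn[of j] dj by simp
  have "card (SS Tri ed \<kappa>) = 2" using occ SS_card by metis
  then obtain a b where ab: "a \<noteq> b" "SS Tri ed \<kappa> = {a,b}" by (meson card_2_iff)
  obtain t1 p1 where a: "a = (t1,p1)" by (cases a)
  obtain t2 p2 where b: "b = (t2,p2)" by (cases b)
  have A: "t1 \<in> Tri" "p1 < 3" "ed t1 p1 = \<kappa>" using ab(2) a SS_mem[of t1 p1 Tri ed \<kappa>] by auto
  have B: "t2 \<in> Tri" "p2 < 3" "ed t2 p2 = \<kappa>" using ab(2) b SS_mem[of t2 p2 Tri ed \<kappa>] by auto
  have t12: "t1 \<noteq> t2"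
  proof
    assume e: "t1 = t2"
    then have "p1 \<noteq> p2" using ab(1) a b by simp
    then have "p2 = nxt True p1 \<or> p2 = nxt False p1" using cover3[OF A(2) B(2)] by simp
    then have "ed t1 p2 = i \<or> ed t1 p2 = j" using nx[OF A] by metis
    then show False using B(3) e kni knj by simp
  qed
  have hit: "\<exists>q<3. ed t q = x" if "t\<in>Tri" "p<3" "ed t p = \<kappa>" "x = i \<or> x = j" for t p x
  proof -
    have "ed t (nxt True p) = x \<or> ed t (nxt False p) = x"
      using nx[OF that(1-3), of True] nx[OF that(1-3), of False] dist[OF that(1-3)] that(4) ij by metis
    then show ?thesis using nxt_lt[OF that(2)] by metis
  qed
  define E where "E = {\<kappa>, i, j}"
  have inE: "ed t q \<in> E" if "t = t1 \<or> t = t2" "q < 3" for t q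
  proof -
    have aux: "ed t q \<in> E" if "t\<in>Tri" "p<3" "ed t p = \<kappa>" "q < 3" for t p q
    proof -
      have "q = p \<or> q = nxt True p \<or> q = nxt False p" using cover3[OF that(2,4)] .
      then show ?thesis using nx[OF that(1-3)] that(3) unfolding E_def by blast
    qed
    show ?thesis using that aux[OF A] aux[OF B] by blast
  qed
  have two: "t = t1 \<or> t = t2" if tw: "x = i \<or> x = j" "t \<in> Tri" "q < 3" "ed t q = x" for x t q
  proof -
    obtain q1 where q1: "q1 < 3" "ed t1 q1 = x" using hit[OF A tw(1)] by blast
    obtain q2 where q2: "q2 < 3" "ed t2 q2 = x" using hit[OF B tw(1)] by blast
    have xa: "x \<in> arcs Tri ed" using tw(1) ia ja by blast
    have cS: "card (SS Tri ed x) = 2" using xa by (simp add: SS_card arcs_def)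
    have s1: "{(t1,q1),(t2,q2)} \<subseteq> SS Tri ed x" using q1 q2 A(1) B(1) by (simp add: SS_mem)
    have c2': "card {(t1,q1),(t2,q2)} = 2" using t12 by simp
    have "{(t1,q1),(t2,q2)} = SS Tri ed x"
      using card_subset_eq[OF SS_fin[OF fin] s1] c2' cS by simp
    moreover have "(t,q) \<in> SS Tri ed x" using tw by (simp add: SS_mem)
    ultimately show ?thesis by auto
  qed
  have Cl: "t = t1 \<or> t = t2" if "t \<in> Tri" "q < 3" "ed t q \<in> E" for t q
  proof (cases "ed t q = \<kappa>")
    case True
    then have "(t,q) \<in> SS Tri ed \<kappa>" using that by (simp add: SS_mem)
    then show ?thesis using ab(2) a b by auto
  next
    case False
    then have "ed t q = i \<or> ed t q = j" using that(3) E_def by simp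
    then show ?thesis using two[OF _ that(1,2)] by blast
  qed
  have reach: "t = t1 \<or> t = t2" if "(t1,t) \<in> (tri_adj Tri ed)\<^sup>*" for t
    using that
  proof (induction rule: rtrancl_induct)
    case base
    then show ?case by simp
  next
    case (step y z)
    from step.hyps(2) obtain a' b' where z: "z \<in> Tri" "a' < 3" "b' < 3" "ed y a' = ed z b'"
      by (auto simp: tri_adj_def)
    have "ed y a' \<in> E" using inE[OF step.IH z(2)] .
    then show ?case using Cl[OF z(1) z(3)] z(4) by simp
  qed
  have conn: "\<forall>t1\<in>Tri. \<forall>t2\<in>Tri. (t1,t2) \<in> (tri_adj Tri ed)\<^sup>*"
    using H unfolding is_unpunctured_triangulation_def by blast
  have allT: "t = t1 \<or> t = t2" if "t \<in> Tri" for t using conn A(1) that reach by blast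
  have nobd: "\<forall>x\<in>sides Tri. \<exists>y\<in>sides Tri. (x,y) \<in> same_vertex Tri ed fl \<and> bdry_corner Tri ed y"
    using H unfolding is_unpunctured_triangulation_def by blast
  have "(t1,0) \<in> sides Tri" using A(1) by (simp add: sides_mem)
  then obtain y where y: "y \<in> sides Tri" "bdry_corner Tri ed y" using nobd by blast
  obtain ty py where yy: "y = (ty,py)" by (cases y)
  have ty: "ty \<in> Tri" "py < 3" using y(1) unfolding yy sides_mem by simp_all
  have Earc: "e \<notin> bsegs Tri ed" if "e \<in> E" for e
  proof -
    have "e \<in> arcs Tri ed" using that karc ia ja unfolding E_def by blast
    then show ?thesis by (rule ab_disj)
  qed
  have e1: "ed ty py \<in> E" using inE[OF allT[OF ty(1)] ty(2)] .
  have e2: "ed ty ((py+2) mod 3) \<in> E" using inE[OF allT[OF ty(1)]] by simp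
  show False using y(2) yy e1 e2 Earc unfolding bdry_corner_def by auto
qed


theorem lemma4p17:
  fixes Tri :: "'t set" and ed :: "'t \<Rightarrow> nat \<Rightarrow> 'e" and fl :: "'t \<Rightarrow> nat \<Rightarrow> bool"
    and Frozen :: "'e set"
  assumes "is_unpunctured_triangulation Tri ed fl Frozen"
    and "i \<in> arcs Tri ed" and "j \<in> arcs Tri ed" and "i \<noteq> j"
    and "exch_poly Tri ed fl Frozen i = exch_poly Tri ed fl Frozen j"
  shows "\<forall>s::bool. \<forall>k\<in>qverts Tri ed Frozen.
           \<not> (bq Tri ed fl Frozen (i, s) k > 0 \<and> bq Tri ed fl Frozen (i, s) (twin k) > 0) \<and>
           \<not> (bq Tri ed fl Frozen (i, s) k \<ge> 2)"
proof (rule ccontr)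
  note H = assms(1) and ia = assms(2) and ja = assms(3) and ij = assms(4) and F = assms(5)
  have fin: "finite Tri" using fin_tri[OF H] .
  assume "\<not> ?thesis"
  then obtain s k where kq: "k \<in> qverts Tri ed Frozen" and
    bad: "(bq Tri ed fl Frozen (i,s) k > 0 \<and> bq Tri ed fl Frozen (i,s) (twin k) > 0) \<or> bq Tri ed fl Frozen (i,s) k \<ge> 2"
    by blast
  obtain \<kappa> e where ke: "k = (\<kappa>,e)" by (cases k)
  have kV: "\<kappa> \<in> arcs Tri ed \<union> Frozen" using kq ke by (simp add: qverts_def)
  have "Frozen \<subseteq> bsegs Tri ed" using H by (simp add: is_unpunctured_triangulation_def)
  then have kab: "\<kappa> \<in> arcs Tri ed \<union> bsegs Tri ed" using kV by blast
  let ?B = "bq Tri ed fl Frozen" and ?N = "narr Tri ed fl"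
  have qi: "(i,b) \<in> qverts Tri ed Frozen" for b using ia by (simp add: qverts_def)
  have qk: "(\<kappa>,b) \<in> qverts Tri ed Frozen" for b using kV by (simp add: qverts_def)
  have X: "?B (i,s) (\<kappa>,False) + ?B (i,s) (\<kappa>,True) \<ge> 2"
  proof (cases "?B (i,s) k > 0 \<and> ?B (i,s) (twin k) > 0")
    case True
    then have "?B (i,s) (\<kappa>,e) > 0" "?B (i,s) (\<kappa>,\<not>e) > 0" using ke by (simp_all add: twin_def)
    then show ?thesis by (cases e) simp_all
  next
    case False
    then have b2: "?B (i,s) (\<kappa>,e) \<ge> 2" using bad ke by blast
    have n2: "?N (i,s) (\<kappa>,e) \<ge> 2" using b2 by (simp add: bq_def qi qk)
    have "?B (i,s) (\<kappa>,\<not>e) \<ge> 0"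
    proof (rule ccontr)
      assume "\<not> ?B (i,s) (\<kappa>,\<not>e) \<ge> 0"
      then have "?N (\<kappa>,\<not>e) (i,s) \<ge> 1" by (simp add: bq_def qi qk)
      moreover have "?N (\<kappa>,\<not>e) (i,s) = ?N (i,\<not>s) (\<kappa>,e)"
        using twin_eq[OF fin, of ed fl "(\<kappa>,\<not>e)" "(i,s)"] by (simp add: twin_def)
      moreover have "?N (i,s) (\<kappa>,e) + ?N (i,\<not>s) (\<kappa>,e) \<le> card (DD Tri ed i \<kappa>)"
        by (rule Lsum[OF fin]) simp_all
      moreover have "card (DD Tri ed i \<kappa>) \<le> 2" using pigeon[OF H ia] .
      ultimately show False using n2 by linarith
    qed
    then show ?thesis using b2 by (cases e) simp_all
  qed
  have ci: "exch_coef Tri ed fl Frozen i \<kappa> \<ge> 2 \<or> exch_coef Tri ed fl Frozen i \<kappa> \<le> -2"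
  proof (cases s)
    case False
    have "exch_coef Tri ed fl Frozen i \<kappa> = ?B (\<kappa>,False) (i,False) + ?B (\<kappa>,True) (i,False)"
      by (simp add: exch_coef_def)
    also have "\<dots> = - (?B (i,s) (\<kappa>,False) + ?B (i,s) (\<kappa>,True))"
      using False bq_anti[of Tri ed fl Frozen "(\<kappa>,False)" "(i,False)"]
        bq_anti[of Tri ed fl Frozen "(\<kappa>,True)" "(i,False)"] by simp
    finally show ?thesis using X by linarith
  next
    case True
    have r: "?B (i,True) (\<kappa>,b) = ?B (\<kappa>,\<not>b) (i,False)" for b
    proof -
      have "?B (i,True) (\<kappa>,b) = ?B (twin (i,False)) (twin (\<kappa>,\<not>b))" by (simp add: twin_def)
      also have "\<dots> = - ?B (i,False) (\<kappa>,\<not>b)" by (rule bq_twin[OF fin])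
      also have "\<dots> = ?B (\<kappa>,\<not>b) (i,False)" using bq_anti[of Tri ed fl Frozen "(i,False)" "(\<kappa>,\<not>b)"] by simp
      finally show ?thesis .
    qed
    have "exch_coef Tri ed fl Frozen i \<kappa> = ?B (\<kappa>,False) (i,False) + ?B (\<kappa>,True) (i,False)"
      by (simp add: exch_coef_def)
    also have "\<dots> = ?B (i,s) (\<kappa>,False) + ?B (i,s) (\<kappa>,True)"
      using True r[of True] r[of False] by simp
    finally show ?thesis using X by linarith
  qed
  have cj: "exch_coef Tri ed fl Frozen j \<kappa> \<ge> 2 \<or> exch_coef Tri ed fl Frozen j \<kappa> \<le> -2"
    using poly_step[OF kV F ci] .
  have di: "card (DD Tri ed \<kappa> i) \<ge> 2" using coef_DD[OF H ia kV ci] .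
  have dj: "card (DD Tri ed \<kappa> j) \<ge> 2" using coef_DD[OF H ja kV cj] .
  show False using final[OF H ia ja ij kab di dj] .
qed


end
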